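(* Let $G$ be a proper subdomain of $\mathbb{R}^n$, let $c\ge 1$, and let $x,y\in G$. Put $$W(x,y)=\log\Big(1+2c\sinh\frac{j_G(x,y)}{2}\Big),\quad L=\frac12+\frac{\log c}{1+j_G(x,y)},\quad U=\frac{j_G(x,y)+(2c+1)}{2(1+j_G(x,y))}.$$ Then $$L\,j_G(x,y)\le W(x,y)\le U\,j_G(x,y).$$
   Context: For $x\in G$, $d_G(x)=\operatorname{dist}(x,\partial G)$. The distance ratio metric is $j_G(x,y)=\log\Big(1+\frac{|x-y|}{\min\{d_G(x),d_G(y)\}}\Big)$ for $x,y\in G$. *)

theory Defs
  imports "HOL-Analysis.Analysis"
begin

definition dG :: "'a::euclidean_space set \<Rightarrow> 'a \<Rightarrow> real" where
  "dG G x = infdist x (frontier G)"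

definition jG :: "'a::euclidean_space set \<Rightarrow> 'a \<Rightarrow> 'a \<Rightarrow> real" where
  "jG G x y = ln (1 + dist x y / min (dG G x) (dG G y))"

end

theory Submission
  imports Defs
begin

lemma two_sinh_eq: "2 * sinh (t/2) = exp (t/2) - 1 / exp (t/2)" for t :: real
  by (simp add: sinh_field_def exp_minus field_simps)

lemma lower_aux:
  fixes t c :: real
  assumes t: "t \<ge> 0" and c: "c \<ge> 1"
  shows "(1/2 + ln c / (1 + t)) * t \<le> ln (1 + 2 * c * sinh (t / 2))"
proof -
  define u where "u = exp (t/2)"
  have u0: "u > 0" and u1: "u \<ge> 1" using t by (auto simp: u_def)
  have uu: "u * u = exp t" by (simp add: u_def flip: exp_add)
  have "1 + t \<le> exp t" by (rule exp_ge_add_one_self)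
  hence uu2: "1 + t \<le> u * u" using uu by simp
  have s: "2 * sinh (t/2) = u - 1/u" by (simp add: two_sinh_eq u_def)
  have A: "u * (1 + c * t) \<le> (1+t) * (1 + c * (u - 1/u))"
  proof -
    have d: "u - (1+t)/u \<ge> 0" using uu2 u0 by (simp add: field_simps)
    have "(1+t) * (1 + c * (u - 1/u)) - u * (1 + c * t) = (1+t) - u + c * (u - (1+t)/u)"
      using u0 by (simp add: field_simps)
    also have "\<dots> \<ge> (1+t) - u + 1 * (u - (1+t)/u)"
      using d c by (intro add_left_mono mult_right_mono) auto
    also have "(1+t) - u + 1 * (u - (1+t)/u) = (1+t) * (1 - 1/u)" using u0 by (simp add: field_simps)
    also have "\<dots> \<ge> 0" using u1 t by (intro mult_nonneg_nonneg) (auto simp: field_simps)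
    finally show ?thesis by simp
  qed
  have pos1: "0 < (1 + c * t) / (1+t)" using t c by (intro divide_pos_pos) (auto intro: add_pos_nonneg)
  have B: "1/(1+t) * ln 1 + t/(1+t) * ln c \<le> ln (1/(1+t) * 1 + t/(1+t) * c)"
  proof -
    have "concave_on {0<..} ln" by (rule ln_concave)
    hence "\<forall>x\<in>{0<..}. \<forall>y\<in>{0<..}. \<forall>u\<ge>0. \<forall>v\<ge>0. u + v = 1 \<longrightarrow> ln (u *\<^sub>R x + v *\<^sub>R y) \<ge> u * ln x + v * ln y"
      unfolding concave_on_iff by blast
    hence "ln ((1/(1+t)) *\<^sub>R 1 + (t/(1+t)) *\<^sub>R c) \<ge> (1/(1+t)) * ln 1 + (t/(1+t)) * ln c"
    proof -
            have h1: "(1::real) \<in> {0<..}" "c \<in> {0<..}" using c by auto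
      have h2: "1/(1+t) \<ge> 0" "t/(1+t) \<ge> 0" "1/(1+t) + t/(1+t) = 1" using t by (auto simp: field_simps)
      show ?thesis using \<open>\<forall>x\<in>{0<..}. _\<close>[rule_format, OF h1 h2] .
    qed
    thus ?thesis by simp
  qed
  have B': "t * ln c / (1+t) \<le> ln ((1 + c * t)/(1+t))"
    using B t by (simp add: field_simps)
  have "(1/2 + ln c / (1 + t)) * t = t/2 + t * ln c / (1+t)" using t by (simp add: field_simps)
  also have "\<dots> \<le> ln u + ln ((1 + c * t)/(1+t))" using B' by (simp add: u_def)
  also have "\<dots> = ln (u * ((1 + c * t)/(1+t)))" using u0 pos1 by (subst ln_mult) auto
  also have "\<dots> \<le> ln (1 + c * (u - 1/u))"
  proof (rule ln_mono)
    show "u * ((1 + c * t) / (1 + t)) \<le> 1 + c * (u - 1 / u)" using A t by (simp add: field_simps)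
    show "0 < u * ((1 + c * t) / (1 + t))" using u0 pos1 by (simp only: mult_pos_pos)
  qed
  finally have fin: "(1/2 + ln c / (1 + t)) * t \<le> ln (1 + c * (u - 1/u))" .
  have "2 * c * sinh (t/2) = c * (u - 1/u)" using s by (metis mult.commute mult.left_commute)
  thus ?thesis using fin by (simp only:)
qed

lemma exp_neg_lower:
  fixes t :: real assumes "t \<ge> 0"
  shows "1 - t + t^2/2 - t^3/6 + t^4/24 - t^5/120 \<le> exp (-t)"
proof -
  obtain th where "exp (-t) = (\<Sum>m<6. ((-t) ^ m) / fact m) + (exp th / fact 6) * (-t) ^ 6"
    using Maclaurin_exp_le[of "-t" 6] by blast
  moreover have "(exp th / fact 6) * (-t) ^ 6 \<ge> 0" by simp
  moreover have "(\<Sum>m<6. ((-t) ^ m) / fact m) = 1 - t + t^2/2 - t^3/6 + t^4/24 - t^5/120"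
    by (simp add: eval_nat_numeral fact_numeral)
  ultimately show ?thesis by linarith
qed

lemma key_poly:
  fixes t :: real assumes t: "t \<ge> 0"
  shows "(1 - exp (-t)) * (1+t)^2 \<le> t * (1 + 2*t)"
proof (cases "t \<le> 2")
  case True
  have e: "1 - exp (-t) \<le> t - t^2/2 + t^3/6 - t^4/24 + t^5/120"
    using exp_neg_lower[OF t] by linarith
  have p1: "t^2 * (11*t - 25) \<le> 0" using True t by (intro mult_nonneg_nonpos) auto
  have p2: "t^4 * (t - 3) \<le> 0" using True t by (intro mult_nonneg_nonpos) auto
  have p: "20*t - 25*t^2 + 11*t^3 - 3*t^4 + t^5 \<le> 60"
    using p1 p2 True by (simp add: algebra_simps eval_nat_numeral)
  have "(1 - exp (-t)) * (1+t)^2 \<le> (t - t^2/2 + t^3/6 - t^4/24 + t^5/120) * (1+t)^2"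
    using e by (intro mult_right_mono) auto
  also have "\<dots> \<le> t * (1 + 2*t)"
  proof -
    have q: "t^2 * (20*t - 25*t^2 + 11*t^3 - 3*t^4 + t^5) \<le> t^2 * 60"
      using p t by (intro mult_left_mono) auto
    have eq: "(t - t^2/2 + t^3/6 - t^4/24 + t^5/120) * (1+t)^2
       = t * (1 + 2*t) - (t^2 * 60 - t^2 * (20*t - 25*t^2 + 11*t^3 - 3*t^4 + t^5)) / 120"
      by (simp add: field_simps eval_nat_numeral)
    show ?thesis unfolding eq using q by simp
  qed
  finally show ?thesis .
next
  case False
  have "1 - exp (-t) \<le> 1" by simp
  moreover have "(1+t)^2 \<le> t * (1 + 2*t)"
  proof -
    have "t * t \<ge> 2 * t" using False by (intro mult_right_mono) auto
    hence "1 + t \<le> t * t" using False by linarith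
    thus ?thesis using False by (simp add: algebra_simps power2_eq_square)
  qed
  moreover have "1 - exp (-t) \<ge> 0" using t by simp
  ultimately show ?thesis
    by (smt (verit) mult_right_mono zero_le_power2 mult_left_le_one_le)
qed

lemma upper_aux:
  fixes t c :: real
  assumes t: "t \<ge> 0" and c: "c \<ge> 1"
  shows "ln (1 + 2 * c * sinh (t / 2)) \<le> (t + (2 * c + 1)) / (2 * (1 + t)) * t"
proof (cases "t = 0")
  case True thus ?thesis by simp
next
  case False
  hence tp: "t > 0" using t by simp
  define u where "u = exp (t/2)"
  define s where "s = 2 * sinh (t/2)"
  define v where "v = 1 - exp (-t)"
  have u0: "u > 0" by (simp add: u_def)
  have uu: "u * u = exp t" by (simp add: u_def flip: exp_add)
  have s_eq: "s = u - 1/u" by (simp add: s_def two_sinh_eq u_def)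
  have ts: "t \<le> s"
    using real_le_x_sinh[of "t/2"] t unfolding s_eq u_def by (simp add: field_simps)
  have sp: "s > 0" using tp ts by simp
  have v0: "v > 0" using tp by (simp add: v_def)
  have suv: "s = u * v"
  proof -
    have "exp (-t) = 1 / (u*u)" using uu by (simp add: exp_minus field_simps)
    thus ?thesis using u0 by (simp add: s_eq v_def field_simps)
  qed
  define a where "a = s * (1+t) / t"
  have a0: "a > 0" using sp tp by (simp add: a_def)
  have cs0: "1 + c * s > 0" using c sp by (simp add: add_pos_nonneg)
  have L1: "ln (1 + c * s) \<le> (1 + c * s)/a - 1 + ln a"
  proof -
    have "ln ((1 + c * s)/a) \<le> (1 + c * s)/a - 1" using cs0 a0 by (intro ln_le_minus_one) simp
    moreover have "ln ((1 + c * s)/a) = ln (1 + c * s) - ln a" using cs0 a0 by (simp add: ln_div)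
    ultimately show ?thesis by simp
  qed
  have L2: "ln a \<le> t/2 + v * (1+t)/t - 1"
  proof -
    have "a = u * (v * (1+t)/t)" by (simp add: a_def suv)
    moreover have "0 < v * (1+t)/t" using v0 tp by simp
    ultimately have "ln a = ln u + ln (v * (1+t)/t)" using u0 ln_mult_pos[of u "v * (1+t)/t"] by simp
    moreover have "ln (v * (1+t)/t) \<le> v * (1+t)/t - 1" using v0 tp by (intro ln_le_minus_one) simp
    moreover have "ln u = t/2" by (simp add: u_def)
    ultimately show ?thesis by simp
  qed
  have t1: "1 + t > 0" using tp by simp
  have L3: "(1 + c * s)/a = t/(s * (1+t)) + c * t/(1+t)"
  proof -
    have n1: "1 + t \<noteq> 0" "s \<noteq> 0" "t \<noteq> 0" using t1 sp tp by auto
    have "(1 + c * s)/a = t * (1 + c * s) / (s * (1+t))" by (simp add: a_def)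
    also have "\<dots> = t/(s * (1+t)) + c * t/(1+t)" using n1 by (simp add: divide_simps) (simp add: algebra_simps)
    finally show ?thesis .
  qed
  have L4: "t/(s * (1+t)) \<le> 1/(1+t)"
  proof -
    have "t/s \<le> 1" using sp ts by simp
    hence "(t/s)/(1+t) \<le> 1/(1+t)" using t1 by (intro divide_right_mono) auto
    thus ?thesis by (simp add: divide_divide_eq_left)
  qed
  have L5: "v * (1+t)/t \<le> (1+2*t)/(1+t)"
    using key_poly[OF t] tp by (simp add: v_def field_simps power2_eq_square)
  have "ln (1 + c * s) \<le> 1/(1+t) + c * t/(1+t) - 1 + t/2 + (1+2*t)/(1+t) - 1"
    using L1 L2 L3 L4 L5 by linarith
  also have "\<dots> = (t + (2 * c + 1)) / (2 * (1 + t)) * t"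
  proof -
    have "1 + t \<noteq> 0" using t1 by simp
    thus ?thesis by (simp add: divide_simps) (simp add: algebra_simps)
  qed
  finally have fin: "ln (1 + c * s) \<le> (t + (2 * c + 1)) / (2 * (1 + t)) * t" .
  have "2 * c * sinh (t/2) = c * s" by (simp add: s_def)
  thus ?thesis using fin by (simp only:)
qed

lemma jG_nonneg: "jG G x y \<ge> 0"
  unfolding jG_def dG_def
  by (simp add: infdist_nonneg)

theorem theorem3p10:
  fixes G :: "('a::euclidean_space) set" and c :: real and x y :: 'a
  assumes "open G" and "connected G" and "G \<noteq> {}" and "G \<noteq> UNIV"
    and "c \<ge> 1" and "x \<in> G" and "y \<in> G"
  shows "(1/2 + ln c / (1 + jG G x y)) * jG G x y \<le> ln (1 + 2 * c * sinh (jG G x y / 2))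
       \<and> ln (1 + 2 * c * sinh (jG G x y / 2)) \<le> (jG G x y + (2 * c + 1)) / (2 * (1 + jG G x y)) * jG G x y"
  using lower_aux[OF jG_nonneg assms(5)] upper_aux[OF jG_nonneg assms(5)] by blast

end
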